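(* Let $r\ge 1$, $m=2^r$, let $n$ be an odd positive integer, and let $b$ be a positive integer having property $\mathcal{P}$ with respect to $n$. Then $x^{2^i n}+b^m$ is irreducible over $\mathbb{Z}$ for every integer $i$ with $0\le i\le r$.
   Context: For a positive integer $N$, a positive integer $b$ has property $\mathcal{P}$ with respect to $N$ if either $b$ is a prime number, or $b=(p_1^{b_1}p_2^{b_2}\cdots p_k^{b_k})^d$ where $k\ge 2$, $p_1,\dots,p_k$ are distinct primes, $b_1,\dots,b_k\ge 1$, $\gcd(b_1,\ldots,b_k)=1$, and $d$ is a positive integer with $\gcd(d,N)=1$. A monic polynomial in $\mathbb{Z}[x]$ of degree $\ge 1$ is irreducible over $\mathbb{Z}$ if it is not a product of two polynomials in $\mathbb{Z}[x]$ of degree at least $1$. *)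

theory Defs
  imports "HOL-Computational_Algebra.Computational_Algebra"
begin

definition property_P :: "nat \<Rightarrow> nat \<Rightarrow> bool" where
  "property_P N b \<longleftrightarrow> prime b \<or>
     (\<exists>S e d. finite S \<and> card S \<ge> 2 \<and> (\<forall>p\<in>S. prime p) \<and> (\<forall>p\<in>S. e p \<ge> 1)
        \<and> Gcd (e ` S) = 1 \<and> d > 0 \<and> coprime d N
        \<and> b = (\<Prod>p\<in>S. p ^ e p) ^ d)"

definition irreducible_over_Z :: "int poly \<Rightarrow> bool" where
  "irreducible_over_Z f \<longleftrightarrow> degree f \<ge> 1 \<and>
     \<not> (\<exists>g h. degree g \<ge> 1 \<and> degree h \<ge> 1 \<and> f = g * h)"

end

theory Submission
  imports Defs
begin


abbreviation X2 :: "int poly" where "X2 \<equiv> [:0,0,1:]"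
abbreviation NX :: "int poly" where "NX \<equiv> [:0,-1:]"

lemma decomp_even_odd:
  fixes p :: "int poly"
  shows "\<exists>A B. p = pcompose A X2 + [:0,1:] * pcompose B X2"
proof (induction p)
  case 0
  show ?case by (rule exI[of _ 0], rule exI[of _ 0]) simp
next
  case (pCons a p)
  then obtain A B where AB: "p = pcompose A X2 + [:0,1:] * pcompose B X2" by blast
  have "pCons a p = pcompose (pCons a B) X2 + [:0,1:] * pcompose A X2"
    unfolding AB by (simp add: pcompose_pCons algebra_simps)
  then show ?case by blast
qed

lemma X2_NX: "pcompose X2 NX = X2" by (simp add: pcompose_pCons)
lemma NX_NX: "pcompose NX NX = [:0,1:]" by (simp add: pcompose_pCons)

lemma even_poly_is_sq:
  fixes P :: "int poly"
  assumes "pcompose P NX = P"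
  shows "\<exists>U. P = pcompose U X2"
proof -
  obtain A B where AB: "P = pcompose A X2 + [:0,1:] * pcompose B X2"
    using decomp_even_odd by blast
  have "pcompose P NX = pcompose A X2 - [:0,1:] * pcompose B X2"
    unfolding AB by (simp add: pcompose_add pcompose_mult pcompose_assoc[symmetric] X2_NX pcompose_pCons)
  with assms AB have "smult 2 ([:0,1:] * pcompose B X2) = 0"
    by (simp add: algebra_simps)
  hence "[:0,1:] * pcompose B X2 = 0" by simp
  with AB show ?thesis by auto
qed

lemma pcompose_X2_inj:
  fixes p q :: "int poly"
  assumes "pcompose p X2 = pcompose q X2"
  shows "p = q"
proof -
  have "pcompose (p - q) X2 = 0" using assms by (simp add: pcompose_diff)
  hence "p - q = 0" by (rule pcompose_eq_0) simp
  thus ?thesis by simp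
qed

lemma prime_int_poly: "prime_elem (p::int poly) \<longleftrightarrow> irreducible p"
  by (rule prime_elem_iff_irreducible)

lemma int_unit_cases: "is_unit (c::int) \<Longrightarrow> c = 1 \<or> c = -1"
  by (simp add: zdvd1_eq abs_if split: if_splits)

lemma step_lemma:
  fixes Fm g h :: "int poly"
  assumes irr: "irreducible Fm" and fac: "pcompose Fm X2 = g*h"
    and dg: "degree g > 0" and dh: "degree h > 0"
  shows "\<exists>e. (e = 1 \<or> e = -1) \<and> g * pcompose g NX = smult e (pcompose Fm X2)"
proof -
  define Fj where "Fj = pcompose Fm X2"
  have evenF: "pcompose Fj NX = Fj"
    unfolding Fj_def by (simp add: pcompose_assoc[symmetric] X2_NX)
  define P where "P = g * pcompose g NX"
  define Q where "Q = h * pcompose h NX"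
  have "pcompose P NX = P"
    unfolding P_def by (simp add: pcompose_mult pcompose_assoc[symmetric] NX_NX mult.commute)
  then obtain U where U: "P = pcompose U X2" using even_poly_is_sq by blast
  have "pcompose Q NX = Q"
    unfolding Q_def by (simp add: pcompose_mult pcompose_assoc[symmetric] NX_NX mult.commute)
  then obtain V where V: "Q = pcompose V X2" using even_poly_is_sq by blast
  have "Fj * Fj = Fj * pcompose Fj NX" using evenF by simp
  also have "\<dots> = P * Q" unfolding P_def Q_def Fj_def fac by (simp add: pcompose_mult algebra_simps)
  also have "\<dots> = pcompose (U * V) X2" by (simp add: U V pcompose_mult)
  finally have "pcompose (Fm * Fm) X2 = pcompose (U * V) X2"
    unfolding Fj_def by (simp add: pcompose_mult)
  hence FUV: "Fm * Fm = U * V" by (rule pcompose_X2_inj)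
  have g0: "g \<noteq> 0" using dg by auto
  have h0: "h \<noteq> 0" using dh by auto
  have gN0: "pcompose g NX \<noteq> 0" using g0 pcompose_eq_0 by fastforce
  have hN0: "pcompose h NX \<noteq> 0" using h0 pcompose_eq_0 by fastforce
  have "degree P = degree g + degree g"
    unfolding P_def using g0 gN0 by (simp add: degree_mult_eq degree_pcompose)
  moreover have "degree P = degree U * 2" unfolding U by (simp add: degree_pcompose)
  ultimately have dU: "degree U > 0" using dg by simp
  have "degree Q = degree h + degree h"
    unfolding Q_def using h0 hN0 by (simp add: degree_mult_eq degree_pcompose)
  moreover have "degree Q = degree V * 2" unfolding V by (simp add: degree_pcompose)
  ultimately have dV: "degree V > 0" using dh by simp
  have nuU: "\<not> is_unit U" using dU by (auto simp: is_unit_poly_iff)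
  have nuV: "\<not> is_unit V" using dV by (auto simp: is_unit_poly_iff)
  have Fm0: "Fm \<noteq> 0" using irr by auto
  have pr: "prime_elem Fm" using irr by (simp add: prime_elem_iff_irreducible)
  have "Fm dvd U * V" using FUV[symmetric] by simp
  hence "Fm dvd U \<or> Fm dvd V" using pr prime_elem_dvd_mult_iff by blast
  hence "\<exists>c. is_unit c \<and> U = smult c Fm"
  proof
    assume "Fm dvd U"
    then obtain W where W: "U = Fm * W" by blast
    have "Fm * Fm = Fm * (W * V)" using FUV W by (simp add: mult.assoc)
    hence "Fm = W * V" using Fm0 by simp
    hence "is_unit W" using irreducibleD[OF irr] nuV by blast
    then obtain c where "W = [:c:]" "is_unit c" by (auto simp: is_unit_poly_iff)
    thus ?thesis using W by auto
  next
    assume "Fm dvd V"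
    then obtain W where W: "V = Fm * W" by blast
    have "Fm * Fm = Fm * (U * W)" using FUV W by (simp add: algebra_simps)
    hence FW: "Fm = U * W" using Fm0 by simp
    hence "is_unit W" using irreducibleD[OF irr] nuU by blast
    then obtain c where c: "W = [:c:]" "is_unit c" by (auto simp: is_unit_poly_iff)
    hence "c = 1 \<or> c = -1" using int_unit_cases by blast
    hence "U = smult c Fm" using FW c by auto
    thus ?thesis using c by blast
  qed
  then obtain c where c: "is_unit c" "U = smult c Fm" by blast
  have "g * pcompose g NX = smult c Fj" using U c unfolding P_def Fj_def by (simp add: pcompose_smult)
  thus ?thesis using int_unit_cases[OF c(1)] unfolding Fj_def by blast
qed



definition val2 :: "int \<Rightarrow> nat" where "val2 x = multiplicity 2 x"

lemma val2_dvd_iff: "x \<noteq> 0 \<Longrightarrow> (2::int)^e dvd x \<longleftrightarrow> e \<le> val2 x"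
  unfolding val2_def by (rule power_dvd_iff_le_multiplicity) auto

lemma val2_mult: "x \<noteq> 0 \<Longrightarrow> y \<noteq> 0 \<Longrightarrow> val2 (x*y) = val2 x + val2 y"
  unfolding val2_def by (rule prime_elem_multiplicity_mult_distrib) auto

lemma val2_dvd_prod: assumes "e \<le> val2 x + val2 y" shows "(2::int)^e dvd x*y"
proof (cases "x = 0 \<or> y = 0")
  case False
  thus ?thesis using assms val2_mult val2_dvd_iff by (metis mult_eq_0_iff)
qed auto

lemma val2_exact: assumes "x \<noteq> 0" shows "(2::int)^(val2 x) dvd x" "\<not> (2::int)^(Suc (val2 x)) dvd x"
  by (subst val2_dvd_iff[OF assms], simp)+

lemma pair_sum:
  fixes T :: "nat \<Rightarrow> int"
  assumes sym: "\<And>i. i \<le> 2*m \<Longrightarrow> T (2*m - i) = T i"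
  shows "(\<Sum>i\<le>2*m. T i) = T m + 2 * (\<Sum>i<m. T i)"
proof -
  have split: "{..2*m} = {..<m} \<union> insert m {m<..2*m}" by auto
  have "(\<Sum>i\<le>2*m. T i) = (\<Sum>i<m. T i) + (T m + (\<Sum>i\<in>{m<..2*m}. T i))"
    unfolding split by (subst sum.union_disjoint) auto
  moreover have "(\<Sum>i\<in>{m<..2*m}. T i) = (\<Sum>i<m. T (2*m - i))"
    by (rule sum.reindex_bij_witness[of _ "\<lambda>i. 2*m - i" "\<lambda>i. 2*m - i"]) auto
  moreover have "(\<Sum>i<m. T (2*m - i)) = (\<Sum>i<m. T i)"
    by (rule sum.cong) (auto simp: sym)
  ultimately show ?thesis by simp
qed

lemma coeff_gg_even:
  fixes g :: "int poly"
  shows "coeff (g * pcompose g NX) (2*m) =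
     (-1)^m * (coeff g m)^2 + 2 * (\<Sum>i<m. (-1)^i * (coeff g i * coeff g (2*m - i)))"
proof -
  define T where "T i = coeff g i * ((-1)^(2*m-i) * coeff g (2*m-i))" for i
  have par: "(-1::int)^(2*m-i) = (-1)^i" if "i \<le> 2*m" for i
  proof -
    have "(-1::int)^(2*m-i) * (-1)^i = (-1)^(2*m)" using that by (simp add: power_add[symmetric])
    also have "\<dots> = 1" by (simp add: power_mult)
    finally show ?thesis by (metis mult_minus1_right mult.right_neutral power_minus1_even
         neg_one_even_power neg_one_odd_power one_neq_neg_one)
  qed
  have "coeff (g * pcompose g NX) (2*m) = (\<Sum>i\<le>2*m. T i)"
    unfolding T_def coeff_mult by (simp add: coeff_pcompose_linear)
  also have "\<dots> = T m + 2 * (\<Sum>i<m. T i)"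
    by (rule pair_sum) (auto simp: T_def par)
  also have "T m = (-1)^m * (coeff g m)^2"
    unfolding T_def by (simp add: mult_2 power2_eq_square)
  also have "(\<Sum>i<m. T i) = (\<Sum>i<m. (-1)^i * (coeff g i * coeff g (2*m - i)))"
    by (rule sum.cong) (auto simp: T_def par)
  finally show ?thesis .
qed



lemma val2_odd: "odd x \<Longrightarrow> val2 x = 0"
proof -
  assume o: "odd x"
  hence "x \<noteq> 0" by auto
  from val2_dvd_iff[OF this, of 1] o show ?thesis by simp
qed

lemma parity_lemma:
  fixes g :: "int poly" and L v :: nat and C :: int
  assumes L: "L \<ge> 1" and C0: "C \<noteq> 0" and vC: "val2 C = 4*v"
    and eq: "g * pcompose g NX = monom 1 (4*L) + [:C:]"
  shows False
proof -
  define c where "c = coeff g"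
  define w where "w i = L * val2 (c i) + v * i" for i
  define P where "P = g * pcompose g NX"
  have coefP: "coeff P s = (if s = 4*L then 1 else 0) + (if s = 0 then C else 0)" for s
    unfolding P_def eq by (simp add: coeff_monom coeff_pCons split: nat.splits)
  have ev: "coeff P (2*m) = (-1)^m * (c m)^2 + 2 * (\<Sum>i<m. (-1)^i * (c i * c (2*m-i)))" for m
    unfolding P_def c_def by (rule coeff_gg_even)
  have c0sq: "(c 0)^2 = C" using ev[of 0] coefP[of 0] L by simp
  have c00: "c 0 \<noteq> 0" using c0sq C0 by auto
  have "val2 C = val2 (c 0) + val2 (c 0)" using val2_mult[OF c00 c00] c0sq by (simp add: power2_eq_square)
  hence vc0: "val2 (c 0) = 2*v" using vC by simp
  define W where "W = {w i | i. i \<le> degree g \<and> c i \<noteq> 0}"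
  have finW: "finite W"
  proof -
    have "W \<subseteq> w ` {..degree g}" unfolding W_def by auto
    thus ?thesis by (rule finite_subset) simp
  qed
  have W0: "w 0 \<in> W" unfolding W_def using c00 by auto
  define t0 where "t0 = Min W"
  have t0le: "t0 \<le> w i" if "c i \<noteq> 0" for i
  proof -
    have "i \<le> degree g" using that le_degree unfolding c_def by blast
    hence "w i \<in> W" unfolding W_def using that by auto
    thus ?thesis unfolding t0_def using finW by simp
  qed
  have "t0 \<in> W" unfolding t0_def using finW W0 by (intro Min_in) auto
  then obtain ms where ms: "c ms \<noteq> 0" "w ms = t0" unfolding W_def by auto
  have Lpos: "L > 0" using L by simp
  have exact: "coeff P (2*m) \<noteq> 0 \<and> val2 (coeff P (2*m)) = 2 * val2 (c m)"
    if cm: "c m \<noteq> 0" and wm: "w m = t0" for m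
  proof -
    define e where "e = 2 * val2 (c m)"
    have terms: "(2::int)^e dvd (-1)^i * (c i * c (2*m-i))" if "i < m" for i
    proof (cases "c i = 0 \<or> c (2*m-i) = 0")
      case True thus ?thesis by auto
    next
      case False
      hence "t0 \<le> w i" "t0 \<le> w (2*m-i)" using t0le by auto
      hence "L * (val2 (c i) + val2 (c (2*m-i))) + v * (i + (2*m - i)) \<ge> 2 * t0"
        unfolding w_def by (simp add: algebra_simps)
      moreover have "i + (2*m-i) = 2*m" using that by simp
      ultimately have "L * (val2 (c i) + val2 (c (2*m-i))) \<ge> L * e"
        using wm unfolding w_def e_def by (simp add: algebra_simps)
      hence "e \<le> val2 (c i) + val2 (c (2*m-i))" using Lpos by simp
      hence "(2::int)^e dvd c i * c (2*m-i)" by (rule val2_dvd_prod)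
      thus ?thesis by simp
    qed
    have S: "(2::int)^Suc e dvd 2 * (\<Sum>i<m. (-1)^i * (c i * c (2*m-i)))"
    proof -
      have "(2::int)^e dvd (\<Sum>i<m. (-1)^i * (c i * c (2*m-i)))"
        by (rule dvd_sum) (use terms in auto)
      thus ?thesis by simp
    qed
    have sq0: "(c m)^2 \<noteq> 0" using cm by simp
    have vsq: "val2 ((c m)^2) = e" unfolding e_def power2_eq_square using val2_mult[OF cm cm] by simp
    have d1: "(2::int)^e dvd (-1)^m * (c m)^2" using val2_exact(1)[OF sq0] vsq by simp
    have d2: "\<not> (2::int)^Suc e dvd (-1)^m * (c m)^2"
    proof
      assume a: "(2::int)^Suc e dvd (-1)^m * (c m)^2"
      have "(-1::int)^m * (c m)^2 = (c m)^2 \<or> (-1::int)^m * (c m)^2 = -((c m)^2)"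
        by (cases "even m") auto
      hence "(2::int)^Suc e dvd (c m)^2" using a by (metis dvd_minus_iff)
      thus False using val2_exact(2)[OF sq0] vsq by simp
    qed
    have "(2::int)^e dvd 2^Suc e" by (rule le_imp_power_dvd) simp
    hence S': "(2::int)^e dvd 2 * (\<Sum>i<m. (-1)^i * (c i * c (2*m-i)))" using S by (rule dvd_trans)
    have A1: "(2::int)^e dvd coeff P (2*m)" unfolding ev
      using d1 S' by (rule dvd_add)
    have A2: "\<not> (2::int)^Suc e dvd coeff P (2*m)"
    proof
      assume "(2::int)^Suc e dvd coeff P (2*m)"
      hence "(2::int)^Suc e dvd coeff P (2*m) - 2 * (\<Sum>i<m. (-1)^i * (c i * c (2*m-i)))"
        using S by (rule dvd_diff)
      thus False using d2 unfolding ev by simp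
    qed
    have nz: "coeff P (2*m) \<noteq> 0" using A2 by auto
    have "e \<le> val2 (coeff P (2*m))" "\<not> Suc e \<le> val2 (coeff P (2*m))"
      using A1 A2 val2_dvd_iff[OF nz] by blast+
    thus ?thesis using nz unfolding e_def by simp
  qed
  have w0: "w 0 = 2*v*L" using vc0 by (simp add: w_def)
  have t0v: "t0 = 2*v*L"
  proof -
    from exact[OF ms] have "coeff P (2*ms) \<noteq> 0" by simp
    hence "2*ms = 4*L \<or> ms = 0" using coefP[of "2*ms"] by (auto split: if_splits)
    thus ?thesis
    proof
      assume "2*ms = 4*L"
      hence msL: "ms = 2*L" by simp
      have "coeff P (2*ms) = 1" using coefP[of "2*ms"] msL L by simp
      hence "val2 (c ms) = 0" using exact[OF ms] by (simp add: val2_def)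
      thus ?thesis using ms msL unfolding w_def by simp
    next
      assume "ms = 0"
      thus ?thesis using ms w0 by simp
    qed
  qed
  have strict: "2*v*L + 1 \<le> w m" if "c m \<noteq> 0" "0 < m" "m < 2*L" for m
  proof (rule ccontr)
    assume "\<not> ?thesis"
    hence "w m = t0" using t0le[OF that(1)] t0v by simp
    from exact[OF that(1) this] have "coeff P (2*m) \<noteq> 0" by simp
    thus False using coefP[of "2*m"] that by (auto split: if_splits)
  qed
  have odd2L: "odd (c (2*L))"
  proof -
    have "coeff P (2*(2*L)) = 1" using coefP[of "4*L"] L by simp
    hence "1 = (c (2*L))^2 + 2 * (\<Sum>i<2*L. (-1)^i * (c i * c (2*(2*L)-i)))"
      using ev[of "2*L"] by (simp add: power_mult)
    hence "odd ((c (2*L))^2 + 2 * (\<Sum>i<2*L. (-1)^i * (c i * c (2*(2*L)-i))))" by simp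
    hence "odd ((c (2*L))^2)" by simp
    thus ?thesis by simp
  qed
  have c2L0: "c (2*L) \<noteq> 0" using odd2L by auto
  define T where "T i = (-1::int)^i * (c i * c (2*L-i))" for i
  have "coeff P (2*L) = 0" using coefP[of "2*L"] L by simp
  hence main: "0 = (-1)^L * (c L)^2 + 2 * (T 0 + (\<Sum>i\<in>{..<L} - {0}. T i))"
    using ev[of L] L unfolding T_def[symmetric] by (simp add: sum.remove[of "{..<L}" 0])
  have dL: "(2::int)^(2*v+2) dvd (c L)^2"
  proof (cases "c L = 0")
    case False
    have "2*v*L + 1 \<le> w L" using strict[OF False] L by simp
    hence h: "2*v*L + 1 \<le> L * val2 (c L) + v * L" unfolding w_def .
    have "v < val2 (c L)"
    proof (rule ccontr)
      assume "\<not> v < val2 (c L)"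
      hence "L * val2 (c L) \<le> L * v" by (simp add: mult_le_mono2)
      moreover have "2*v*L + 1 \<le> L * val2 (c L) + L * v" using h by (simp add: mult.commute)
      moreover have "2*v*L = 2*(L*v)" by simp
      ultimately show False by linarith
    qed
    hence "2*v+2 \<le> val2 (c L) + val2 (c L)" by simp
    thus ?thesis unfolding power2_eq_square by (rule val2_dvd_prod)
  qed (simp add: zero_power2)
  have dT: "(2::int)^(2*v+1) dvd T i" if "i \<in> {..<L} - {0}" for i
  proof (cases "c i = 0 \<or> c (2*L-i) = 0")
    case True thus ?thesis by (auto simp: T_def)
  next
    case False
    have i: "0 < i" "i < L" using that by auto
    have "2*v*L + 1 \<le> w i" using strict[of i] False i by auto
    moreover have "2*v*L + 1 \<le> w (2*L-i)" using strict[of "2*L-i"] False i by auto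
    ultimately have "4*v*L + 2 \<le> L * (val2 (c i) + val2 (c (2*L-i))) + v * (i + (2*L-i))"
      unfolding w_def by (simp add: algebra_simps)
    moreover have "i + (2*L-i) = 2*L" using i by simp
    ultimately have "L * (2*v) < L * (val2 (c i) + val2 (c (2*L-i)))"
      by (simp add: algebra_simps)
    hence "2*v+1 \<le> val2 (c i) + val2 (c (2*L-i))" by simp
    hence "(2::int)^(2*v+1) dvd c i * c (2*L-i)" by (rule val2_dvd_prod)
    thus ?thesis unfolding T_def by simp
  qed
  have dS: "(2::int)^(2*v+2) dvd 2 * (\<Sum>i\<in>{..<L} - {0}. T i)"
  proof -
    have "(2::int)^(2*v+1) dvd (\<Sum>i\<in>{..<L} - {0}. T i)" by (rule dvd_sum) (use dT in auto)
    hence "2 * (2::int)^(2*v+1) dvd 2 * (\<Sum>i\<in>{..<L} - {0}. T i)" by (rule mult_dvd_mono[OF dvd_refl])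
    moreover have "(2::int)^(2*v+2) = 2 * 2^(2*v+1)" by simp
    ultimately show ?thesis by (simp only:)
  qed
  have "(2::int)^(2*v+2) dvd 2 * T 0"
  proof -
    have "2 * T 0 = - ((-1)^L * (c L)^2) - 2 * (\<Sum>i\<in>{..<L} - {0}. T i)"
      using main by (simp add: algebra_simps)
    moreover have "(2::int)^(2*v+2) dvd - ((-1)^L * (c L)^2)"
      unfolding dvd_minus_iff using dL by (rule dvd_mult)
    ultimately show ?thesis using dS by (simp only: dvd_diff)
  qed
  hence "(2::int)^(2*v+2) dvd 2 * (c 0 * c (2*L))" by (simp add: T_def)
  moreover have "(2::int)^(2*v+2) = 2 * 2^(2*v+1)" by simp
  ultimately have "2 * (2::int)^(2*v+1) dvd 2 * (c 0 * c (2*L))" by (simp only:)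
  hence "(2::int)^(2*v+1) dvd c 0 * c (2*L)" by (subst (asm) dvd_times_left_cancel_iff) simp_all
  moreover have "val2 (c 0 * c (2*L)) = 2*v" using val2_mult[OF c00 c2L0] vc0 val2_odd[OF odd2L] by simp
  moreover have "c 0 * c (2*L) \<noteq> 0" using c00 c2L0 by simp
  ultimately show False using val2_dvd_iff[of "c 0 * c (2*L)" "2*v+1"] by simp
qed



lemma coprime_odd_pow2: "odd (n::nat) \<Longrightarrow> coprime n (2^r)"
  by (simp add: coprime_commute)

lemma nt_lemma:
  fixes a b n k r :: nat
  assumes n: "odd n" and b: "b > 0" and P: "property_P n b" and eq: "a^n = b^(2^r * k)"
  shows "n dvd k"
proof -
  have cop: "coprime n (2^r)" using n by (rule coprime_odd_pow2)
  have n0: "n > 0" using n by (cases n) auto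
  have a0: "a \<noteq> 0"
  proof
    assume "a = 0"
    hence "b^(2^r * k) = 0" using eq n0 by (simp add: power_0_left)
    thus False using b by simp
  qed
  from P[unfolded property_P_def] show ?thesis
  proof
    assume pb: "prime b"
    have "multiplicity b (a^n) = n * multiplicity b a"
      using pb a0 by (simp add: prime_elem_multiplicity_power_distrib)
    moreover have "multiplicity b (b^(2^r*k)) = 2^r * k"
      using pb by (simp add: multiplicity_same_power prime_gt_1_nat)
    ultimately have "n dvd 2^r * k" using eq by (metis dvd_triv_left)
    thus ?thesis using cop by (simp add: coprime_dvd_mult_right_iff)
  next
    assume "\<exists>S e d. finite S \<and> card S \<ge> 2 \<and> (\<forall>p\<in>S. prime p) \<and> (\<forall>p\<in>S. e p \<ge> 1)
        \<and> Gcd (e ` S) = 1 \<and> d > 0 \<and> coprime d n \<and> b = (\<Prod>p\<in>S. p ^ e p) ^ d"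
    then obtain S e d where S: "finite S" "\<forall>p\<in>S. prime p" "Gcd (e ` S) = 1" "d > 0"
      "coprime d n" "b = (\<Prod>p\<in>S. p ^ e p) ^ d" by blast
    define M where "M = 2^r * k * d"
    have dv: "n dvd M * e p" if p: "p \<in> S" for p
    proof -
      have pp: "prime p" using S p by auto
      have prod0: "(\<Prod>p\<in>S. p ^ e p) \<noteq> 0" using S(1,2) by (auto simp: prime_gt_0_nat)
      have "multiplicity p b = d * e p"
        using S pp prod0 p by (simp add: prime_elem_multiplicity_power_distrib multiplicity_prod_prime_powers)
      hence "multiplicity p (b^(2^r*k)) = M * e p"
        using pp b by (simp add: prime_elem_multiplicity_power_distrib M_def)
      moreover have "multiplicity p (a^n) = n * multiplicity p a"
        using pp a0 by (simp add: prime_elem_multiplicity_power_distrib)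
      ultimately show ?thesis using eq by (metis dvd_triv_left)
    qed
    have "n dvd Gcd ((\<lambda>p. M * e p) ` S)" by (rule Gcd_greatest) (use dv in auto)
    also have "(\<lambda>p. M * e p) ` S = (*) M ` (e ` S)" by (simp add: image_image)
    also have "Gcd \<dots> = M" using S(3) by (simp add: Gcd_mult)
    finally have "n dvd 2^r * k * d" unfolding M_def .
    moreover have "coprime n d" using S(5) by (simp add: coprime_commute)
    ultimately have "n dvd 2^r * k" by (simp add: coprime_dvd_mult_left_iff)
    thus ?thesis using cop by (simp add: coprime_dvd_mult_right_iff)
  qed
qed



abbreviation cpx :: "int poly \<Rightarrow> complex poly" where "cpx \<equiv> map_poly of_int"

lemma cpx_add: "cpx (p + q) = cpx p + cpx q"
  by (intro poly_eqI) (simp add: coeff_map_poly)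

lemma cpx_mult: "cpx (p * q) = cpx p * cpx q"
  by (induction p) (simp_all add: map_poly_pCons map_poly_smult cpx_add)

lemma base_norm:
  fixes g h :: "int poly" and n :: nat and C :: int
  assumes C: "C > 0" and fac: "monom 1 n + [:C:] = g * h" and lc: "\<bar>lead_coeff g\<bar> = 1"
  shows "\<bar>coeff g 0\<bar>^n = C^(degree g)"
proof -
  define gc where "gc = cpx g"
  define hc where "hc = cpx h"
  have Fc: "monom 1 n + [:of_int C:] = gc * hc"
  proof -
    have "cpx (monom 1 n + [:C:]) = cpx (g*h)" using fac by simp
    thus ?thesis unfolding gc_def hc_def cpx_mult cpx_add by (simp add: map_poly_monom map_poly_pCons)
  qed
  have dg: "degree gc = degree g" unfolding gc_def by (rule degree_map_poly) simp
  have lgc: "lead_coeff gc = of_int (lead_coeff g)"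
    unfolding gc_def dg[unfolded gc_def] by (simp add: coeff_map_poly)
  obtain root where root: "smult (lead_coeff gc) (\<Prod>i<degree gc. [:-root i, 1:]) = gc"
    using complex_poly_decompose' by blast
  have rt: "poly gc (root i) = 0" if "i < degree gc" for i
  proof -
    have "poly gc (root i) = lead_coeff gc * (\<Prod>j<degree gc. poly [:-root j, 1:] (root i))"
      by (subst root[symmetric]) (simp add: poly_prod)
    also have "(\<Prod>j<degree gc. poly [:-root j, 1:] (root i)) = 0"
      using that by (intro prod_zero) (auto intro!: bexI[of _ i])
    finally show ?thesis by simp
  qed
  have nr: "cmod (root i) ^ n = of_int C" if "i < degree gc" for i
  proof -
    have "poly (monom 1 n + [:of_int C:]) (root i) = 0" unfolding Fc using rt[OF that] by simp
    hence "root i ^ n = - of_int C" by (simp add: poly_monom add_eq_0_iff)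
    hence "cmod (root i ^ n) = cmod (- of_int C)" by simp
    thus ?thesis using C by (simp add: norm_power)
  qed
  have abs_lc: "\<bar>real_of_int (lead_coeff g)\<bar> = 1" using lc by (metis of_int_abs of_int_1)
  have "poly gc 0 = lead_coeff gc * (\<Prod>j<degree gc. - root j)"
    by (subst root[symmetric]) (simp add: poly_prod)
  hence "cmod (poly gc 0) = (\<Prod>j<degree gc. cmod (root j))"
    using lc lgc abs_lc by (simp add: norm_mult prod_norm[symmetric])
  hence "cmod (poly gc 0) ^ n = (\<Prod>j<degree gc. cmod (root j) ^ n)"
    by (simp add: prod_power_distrib)
  also have "\<dots> = (\<Prod>j<degree gc. of_int C)" using nr by (intro prod.cong) auto
  also have "\<dots> = of_int C ^ degree g" using dg by simp
  finally have *: "cmod (poly gc 0) ^ n = of_int C ^ degree g" .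
  have "poly gc 0 = of_int (coeff g 0)" unfolding gc_def by (simp add: poly_0_coeff_0 coeff_map_poly)
  hence "cmod (poly gc 0) = of_int \<bar>coeff g 0\<bar>" by simp
  with * have "(of_int (\<bar>coeff g 0\<bar>^n) :: real) = of_int (C ^ degree g)" by simp
  thus ?thesis by (simp only: of_int_eq_iff)
qed


lemma monom_comp_X2: "pcompose (monom (1::int) m) X2 = monom 1 (2*m)"
proof (induction m)
  case 0 show ?case by (simp add: pcompose_1)
next
  case (Suc m)
  have "monom (1::int) (Suc m) = pCons 0 (monom 1 m)" by (simp add: monom_Suc)
  hence "pcompose (monom (1::int) (Suc m)) X2 = X2 * monom 1 (2*m)"
    by (simp add: pcompose_pCons Suc)
  also have "X2 * monom 1 (2*m) = monom 1 (2 * Suc m)"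
  proof -
    have X2m: "X2 = monom 1 2"
      by (rule poly_eqI) (simp add: coeff_pCons coeff_monom split: nat.splits)
    show ?thesis by (subst X2m) (simp add: mult_monom)
  qed
  finally show ?case .
qed

lemma F_comp: "pcompose (monom 1 m + [:C::int:]) X2 = monom 1 (2*m) + [:C:]"
  by (simp add: pcompose_add monom_comp_X2)

lemma degree_F: "m > 0 \<Longrightarrow> degree (monom 1 m + [:C::int:]) = m"
  by (subst degree_add_eq_left) (auto simp: degree_monom_eq)

lemma lead_F: "m > 0 \<Longrightarrow> lead_coeff (monom 1 m + [:C::int:]) = 1"
  using degree_F[of m C] by (cases m) (simp_all add: coeff_monom)

lemma unit_lead: "(a::int) * b = 1 \<Longrightarrow> \<bar>a\<bar> = 1"
  by (metis dvd_triv_left zdvd1_eq)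

lemma main_induct:
  fixes n r b j :: nat
  assumes n: "odd n" and b: "b > 0" and P: "property_P n b" and j: "j \<le> r"
  shows "\<forall>g h. monom 1 (2^j*n) + [:int b^(2^r):] = g*h \<longrightarrow> degree g = 0 \<or> degree h = 0"
  using j
proof (induction j)
  define C where "C = int b^(2^r)"
  have C: "C > 0" unfolding C_def using b by simp
  have n0: "n > 0" using n by (cases n) auto
  case 0
  show ?case
  proof (intro allI impI, rule ccontr)
    fix g h :: "int poly"
    assume fac: "monom 1 (2^0*n) + [:int b^(2^r):] = g*h" and nd: "\<not> (degree g = 0 \<or> degree h = 0)"
    hence fac': "monom 1 n + [:C:] = g*h" unfolding C_def by simp
    have g0: "g \<noteq> 0" "h \<noteq> 0" using nd by auto
    have "degree (g*h) = n" using fac' degree_F[OF n0] by metis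
    hence dsum: "degree g + degree h = n" using g0 by (simp add: degree_mult_eq)
    have "lead_coeff g * lead_coeff h = 1" using fac' lead_F[OF n0, of C] by (simp add: lead_coeff_mult)
    hence lc: "\<bar>lead_coeff g\<bar> = 1" by (rule unit_lead)
    have "\<bar>coeff g 0\<bar>^n = C^(degree g)" by (rule base_norm[OF C fac' lc])
    hence "int (nat \<bar>coeff g 0\<bar> ^ n) = int (b^(2^r * degree g))"
      unfolding C_def by (simp add: power_mult)
    hence "nat \<bar>coeff g 0\<bar> ^ n = b^(2^r * degree g)" by (simp only: of_nat_eq_iff)
    hence "n dvd degree g" by (rule nt_lemma[OF n b P])
    moreover have "0 < degree g" "degree g < n" using nd dsum by auto
    ultimately show False by (simp add: nat_dvd_not_less)
  qed
next
  define C where "C = int b^(2^r)"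
  have C: "C > 0" unfolding C_def using b by simp
  have n0: "n > 0" using n by (cases n) auto
  case (Suc j)
  hence IH: "\<forall>g h. monom 1 (2^j*n) + [:C:] = g*h \<longrightarrow> degree g = 0 \<or> degree h = 0"
    unfolding C_def by simp
  define Fm where "Fm = monom 1 (2^j*n) + [:C:]"
  have m0: "2^j*n > 0" using n0 by simp
  have dFm: "degree Fm = 2^j*n" unfolding Fm_def using degree_F[OF m0] .
  have lFm: "lead_coeff Fm = 1" unfolding Fm_def using lead_F[OF m0] .
  have irr: "irreducible Fm"
  proof (rule irreducibleI)
    show "Fm \<noteq> 0" using lFm by auto
    show "\<not> is_unit Fm" using dFm m0 by (auto simp: is_unit_poly_iff)
    fix a b assume ab: "Fm = a * b"
    have lab: "lead_coeff a * lead_coeff b = 1" using ab lFm by (simp add: lead_coeff_mult)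
    have "degree a = 0 \<or> degree b = 0" using IH[rule_format, of a b] ab unfolding Fm_def by simp
    thus "is_unit a \<or> is_unit b"
    proof
      assume "degree a = 0"
      then obtain c where c: "a = [:c:]" by (metis degree_eq_zeroE)
      have "c * lead_coeff b = 1" using lab c by simp
      hence "is_unit c" by (metis dvd_triv_left)
      thus ?thesis using c by (simp add: is_unit_const_poly_iff)
    next
      assume "degree b = 0"
      then obtain c where c: "b = [:c:]" by (metis degree_eq_zeroE)
      have "lead_coeff a * c = 1" using lab c by simp
      hence "is_unit c" by (metis dvd_triv_right)
      thus ?thesis using c by (simp add: is_unit_const_poly_iff)
    qed
  qed
  have Fcomp: "pcompose Fm X2 = monom 1 (2^Suc j*n) + [:C:]"
    unfolding Fm_def F_comp by (simp add: mult.assoc)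
  show ?case
  proof (intro allI impI, rule ccontr)
    fix g h :: "int poly"
    assume fac: "monom 1 (2^Suc j*n) + [:int b^(2^r):] = g*h" and nd: "\<not> (degree g = 0 \<or> degree h = 0)"
    hence fac': "pcompose Fm X2 = g*h" unfolding Fcomp C_def by simp
    obtain e where e: "e = 1 \<or> e = -1" and ge: "g * pcompose g NX = smult e (pcompose Fm X2)"
      using step_lemma[OF irr fac'] nd by auto
    have "coeff (g * pcompose g NX) 0 = coeff g 0 * coeff g 0"
      by (simp add: coeff_mult_0 pcompose_coeff_0 poly_0_coeff_0)
    moreover have "coeff (smult e (pcompose Fm X2)) 0 = e * C"
      unfolding Fcomp using n0 by simp
    ultimately have "coeff g 0 * coeff g 0 = e * C" using ge by simp
    moreover have "coeff g 0 * coeff g 0 \<ge> 0" by simp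
    ultimately have e1: "e = 1" using e C by auto
    hence geq: "g * pcompose g NX = monom 1 (2^Suc j*n) + [:C:]" using ge Fcomp by simp
    have g0: "g \<noteq> 0" using nd by auto
    have gN0: "pcompose g NX \<noteq> 0" using g0 pcompose_eq_0 by fastforce
    show False
    proof (cases j)
      case 0
      have m1: "2^Suc j * n > 0" using n0 by simp
      have "degree (g * pcompose g NX) = degree g + degree g"
        using g0 gN0 by (simp add: degree_mult_eq degree_pcompose)
      hence "degree g + degree g = 2 * n" using geq degree_F[OF m1, of C] 0 by simp
      hence dg: "degree g = n" by simp
      have "lead_coeff (g * pcompose g NX) = lead_coeff g * (lead_coeff g * (-1)^degree g)"
        by (simp add: lead_coeff_mult lead_coeff_comp)
      also have "\<dots> = - (lead_coeff g * lead_coeff g)" using dg n by simp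
      finally have "- (lead_coeff g * lead_coeff g) = 1" using geq lead_F[OF m1, of C] by simp
      moreover have "lead_coeff g * lead_coeff g \<ge> 0" by simp
      ultimately show False by linarith
    next
      case (Suc j')
      define L where "L = 2^j' * n"
      have L1: "L \<ge> 1" unfolding L_def using n0 by simp
      have r2: "r \<ge> 2" using Suc.prems \<open>j = Suc j'\<close> by simp
      define v where "v = 2^(r-2) * val2 (int b)"
      have "val2 C = 2^r * val2 (int b)" unfolding C_def val2_def using b
        by (simp add: prime_elem_multiplicity_power_distrib)
      also have "(2::nat)^r = 4 * 2^(r-2)" using r2
        by (metis le_add_diff_inverse power_add power2_eq_square numeral_Bit0 mult_2 numeral_One mult_1)
      finally have vC: "val2 C = 4 * v" unfolding v_def by simp
      have e4: "2^Suc j * n = 4 * L" unfolding L_def using \<open>j = Suc j'\<close> by simp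
      have "g * pcompose g NX = monom 1 (4*L) + [:C:]" using geq unfolding e4 .
      thus False using parity_lemma[OF L1 _ vC] C by simp
    qed
  qed
qed

theorem lemma4:
  fixes r n b i :: nat
  assumes "r \<ge> 1" and "odd n" and "b > 0" and "property_P n b" and "i \<le> r"
  shows "irreducible_over_Z (monom 1 (2 ^ i * n) + [: int b ^ (2 ^ r) :])"
proof -
  have n0: "n > 0" using assms(2) by (cases n) auto
  have m0: "2^i * n > 0" using n0 by simp
  have M: "\<forall>g h. monom 1 (2^i*n) + [:int b^(2^r):] = g*h \<longrightarrow> degree g = 0 \<or> degree h = 0"
    by (rule main_induct[OF assms(2,3,4,5)])
  show ?thesis unfolding irreducible_over_Z_def
  proof
    show "1 \<le> degree (monom 1 (2 ^ i * n) + [:int b ^ 2 ^ r:])" using degree_F[OF m0] m0 by simp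
    show "\<not> (\<exists>g h. 1 \<le> degree g \<and> 1 \<le> degree h \<and> monom 1 (2 ^ i * n) + [:int b ^ 2 ^ r:] = g * h)"
      using M by fastforce
  qed
qed

end
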